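(* Under the standing assumptions, suppose $a>1/4$ and $m\ge 6$, and let $\theta_a=\cos^{-1}\!\left(-\frac{1}{2\sqrt a}\right)$. For an integer $h$ with $\lfloor (m+1)/2\rfloor+1\le h\le m+1$ let $$J_h=\begin{cases}\left(\frac{h-1}{m+1}\pi,\frac{h}{m+1}\pi\right) & \text{if } \lfloor (m+1)/2\rfloor+2\le h\le m+1,\\[2pt] \left(\frac{\pi}{2},\frac{h}{m+1}\pi\right) & \text{if } h=\lfloor (m+1)/2\rfloor+1.\end{cases}$$ If $\theta_a\in J_h$, then $g_m$ has at least two zeros in $J_h\setminus\{\theta_a\}$ when $\lfloor (m+1)/2\rfloor+2\le h\le m$, and at least one zero in $J_h\setminus\{\theta_a\}$ when $h=m+1$ or $h=\lfloor(m+1)/2\rfloor+1$.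
   Context: Standing assumptions: $a,b\in\mathbb{R}$ with $b>0$, $1+a+b>0$, $9-27a+b>0$, $2-8a+8a^2+ab\ne0$, $b+1-a\ne0$. Let $f^*(\zeta,\theta)=(\zeta+2\cos\theta)(2\zeta\cos\theta+1)+b\zeta-a(\zeta+2\cos\theta)^3$. Under these assumptions, for each $\theta\in(\pi/2,\pi)$ the polynomial $f^*(\cdot,\theta)$ has exactly one real zero in $(-1,1)$; denote it $w(\theta)$ and set $\zeta(\theta)=1/w(\theta)$ (finite except at $\theta_a$). For $\theta\in(\pi/2,\pi)$ with $w(\theta)\ne0$ define $$g_m(\theta)=\frac{(\zeta(\theta)-\cos\theta)\sin((m+1)\theta)}{\sin\theta}-\cos((m+1)\theta)+\frac{1}{\zeta(\theta)^{m+1}}.$$ *)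

theory Defs
  imports Complex_Main
begin

definition fstar :: "real \<Rightarrow> real \<Rightarrow> real \<Rightarrow> real \<Rightarrow> real" where
  "fstar a b z t = (z + 2 * cos t) * (2 * z * cos t + 1) + b * z - a * (z + 2 * cos t) ^ 3"

definition wz :: "real \<Rightarrow> real \<Rightarrow> real \<Rightarrow> real" where
  "wz a b t = (THE z. -1 < z \<and> z < 1 \<and> fstar a b z t = 0)"

definition zeta :: "real \<Rightarrow> real \<Rightarrow> real \<Rightarrow> real" where
  "zeta a b t = 1 / wz a b t"

definition gm :: "real \<Rightarrow> real \<Rightarrow> nat \<Rightarrow> real \<Rightarrow> real" where
  "gm a b m t = (zeta a b t - cos t) * sin ((real m + 1) * t) / sin t
      - cos ((real m + 1) * t) + 1 / (zeta a b t) ^ (m + 1)"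

definition theta_a :: "real \<Rightarrow> real" where
  "theta_a a = arccos (- 1 / (2 * sqrt a))"

definition Jh :: "nat \<Rightarrow> nat \<Rightarrow> real set" where
  "Jh m h = (if h = (m + 1) div 2 + 1
             then {pi / 2 <..< real h / (real m + 1) * pi}
             else {(real h - 1) / (real m + 1) * pi <..< real h / (real m + 1) * pi})"

end

theory Submission
  imports Defs
begin


lemma poly_m1:
  fixes a b c :: real
  assumes "a > 1/4" "b > 27*a - 9" "b > a - 1" "-1 \<le> c" "c \<le> 0"
  shows "(-1 + 2*c)*(2*(-1)*c + 1) + b*(-1) - a*(-1+2*c)^3 < 0"
proof -
  define v where "v = 1 - 2*c"
  have v1: "1 \<le> v" "v \<le> 3" using assms unfolding v_def by auto
  have e: "(-1 + 2*c)*(2*(-1)*c + 1) + b*(-1) - a*(-1+2*c)^3 = a*v^3 - v^2 - b"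
    unfolding v_def by (simp add: algebra_simps power3_eq_cube power2_eq_square)
  have "a*v^3 - v^2 < b"
  proof (cases "a*(v^2+v+1) \<le> v+1")
    case True
    have "a*v^3 - v^2 - (a-1) = (v-1)*(a*(v^2+v+1) - (v+1))"
      by (simp add: algebra_simps power3_eq_cube power2_eq_square)
    also have "\<dots> \<le> 0" using True v1 by (intro mult_nonneg_nonpos) auto
    finally show ?thesis using assms by linarith
  next
    case False
    have "a*(v^2+3*v+9) - (v+3) = a*(v^2+v+1) + a*(2*v+8) - v - 3" by (simp add: algebra_simps)
    moreover have "a*(2*v+8) \<ge> a*10" using v1 assms by (intro mult_left_mono) auto
    ultimately have pos: "a*(v^2+3*v+9) - (v+3) \<ge> 0" using False assms by linarith
    have "a*v^3 - v^2 - (27*a-9) = (v-3)*(a*(v^2+3*v+9) - (v+3))"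
      by (simp add: algebra_simps power3_eq_cube power2_eq_square)
    also have "\<dots> \<le> 0" using pos v1 by (intro mult_nonpos_nonneg) auto
    finally show ?thesis using assms by linarith
  qed
  then show ?thesis using e by linarith
qed

lemma poly_1:
  fixes a b c :: real
  assumes "a > 1/4" "b > 0" "b > a - 1" "-1 \<le> c" "c \<le> 0"
  shows "(1 + 2*c)*(2*1*c + 1) + b*1 - a*(1+2*c)^3 > 0"
proof -
  define u where "u = 1 + 2*c"
  have u1: "-1 \<le> u" "u \<le> 1" using assms unfolding u_def by auto
  have e: "(1 + 2*c)*(2*1*c + 1) + b*1 - a*(1+2*c)^3 = u^2*(1 - a*u) + b"
    unfolding u_def by (simp add: algebra_simps power3_eq_cube power2_eq_square)
  have "u^2*(1-a*u) \<ge> min 0 (1-a)"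
  proof (cases "1 - a*u \<ge> 0")
    case True then show ?thesis by (simp add: min_le_iff_disj)
  next
    case False
    have "u^2 \<le> 1" using u1 by (simp add: abs_square_le_1 abs_le_iff)
    have "u^2*(1-a*u) \<ge> 1*(1-a*u)" using False \<open>u^2 \<le> 1\<close> by (intro mult_right_mono_neg) auto
    moreover have "a*u \<le> a" using u1 assms by (simp add: mult_left_le)
    ultimately show ?thesis by (simp add: min_le_iff_disj)
  qed
  then show ?thesis using e assms by (auto simp: min_def split: if_splits)
qed



lemma two_roots_False:
  fixes a b c z1 z2 :: real
  defines "p \<equiv> \<lambda>z. (z + 2 * c) * (2 * z * c + 1) + b * z - a * (z + 2 * c) ^ 3"
  assumes "a > 0" "p (-1) < 0" "p 1 > 0" "-1 < z1" "z1 < z2" "z2 < 1" "p z1 = 0" "p z2 = 0"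
  shows False
proof -
  define s where "s = z1 + z2"
  define q where "q = z1 * z2"
  define k where "k = 2*c - 6*a*c - a*s"
  define al where "al = (1 + 4*c^2 + b - 12*a*c^2) + k*s + a*q"
  define be where "be = (2*c - 8*a*c^3) - k*q"
  have id: "\<And>z. p z = (z-z1)*(z-z2)*(k - a*z) + al*z + be"
    unfolding p_def al_def be_def k_def s_def q_def
    by (simp add: algebra_simps power3_eq_cube power2_eq_square)
  have h1: "al*z1 + be = 0" using id[of z1] assms by simp
  have h2: "al*z2 + be = 0" using id[of z2] assms by simp
  have "al*(z1 - z2) = (al*z1 + be) - (al*z2 + be)" by (simp add: algebra_simps)
  then have "al*(z1 - z2) = 0" using h1 h2 by simp
  then have al0: "al = 0" using assms by simp
  then have be0: "be = 0" using h1 by simp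
  have m1: "p (-1) = (1+z1)*(1+z2)*(k+a)" using id[of "-1"] al0 be0 by (simp add: algebra_simps)
  have p1: "p 1 = (1-z1)*(1-z2)*(k-a)" using id[of 1] al0 be0 by (simp add: algebra_simps)
  have "(1+z1)*(1+z2) > 0" using assms by simp
  then have "k + a < 0" using m1 assms(3) mult_nonneg_nonneg[of "(1+z1)*(1+z2)" "k+a"] by linarith
  moreover have "(1-z1)*(1-z2) > 0" using assms by simp
  then have "k - a > 0" using p1 assms(4) mult_nonneg_nonpos[of "(1-z1)*(1-z2)" "k-a"] by linarith
  ultimately show False using assms by linarith
qed

lemma bA: fixes a b :: real assumes "a > 1/4" "b > 0" "9 - 27*a + b > 0" shows "b > a - 1"
proof (cases "a \<le> 8/26")
  case True then show ?thesis using assms by linarith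
next
  case False then show ?thesis using assms by linarith
qed

lemma fstar_m1: fixes a b t :: real
  assumes "a > 1/4" "b > 0" "9 - 27*a + b > 0" "-1 \<le> cos t" "cos t \<le> 0"
  shows "fstar a b (-1) t < 0"
  using poly_m1[of a b "cos t"] bA[OF assms(1-3)] assms unfolding fstar_def by simp

lemma fstar_1: fixes a b t :: real
  assumes "a > 1/4" "b > 0" "9 - 27*a + b > 0" "-1 \<le> cos t" "cos t \<le> 0"
  shows "fstar a b 1 t > 0"
  using poly_1[of a b "cos t"] bA[OF assms(1-3)] assms unfolding fstar_def by simp

lemma fstar_uniq: fixes a b t z1 z2 :: real
  assumes "a > 1/4" "b > 0" "9 - 27*a + b > 0" "-1 \<le> cos t" "cos t \<le> 0"
    "-1 < z1" "z1 < 1" "-1 < z2" "z2 < 1" "fstar a b z1 t = 0" "fstar a b z2 t = 0"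
  shows "z1 = z2"
proof (rule ccontr)
  assume ne: "z1 \<noteq> z2"
  have m: "fstar a b (-1) t < 0" by (rule fstar_m1[OF assms(1-5)])
  have p: "fstar a b 1 t > 0" by (rule fstar_1[OF assms(1-5)])
  show False
  proof (cases "z1 < z2")
    case True
    show False
      by (rule two_roots_False[of a "cos t" b z1 z2]) (use assms m p True in \<open>simp_all add: fstar_def\<close>)
  next
    case False
    then have "z2 < z1" using ne by simp
    show False
      by (rule two_roots_False[of a "cos t" b z2 z1]) (use assms m p \<open>z2 < z1\<close> in \<open>simp_all add: fstar_def\<close>)
  qed
qed

lemma cont_fstar_z: "continuous_on S (\<lambda>z. fstar a b z t)"
  unfolding fstar_def by (intro continuous_intros)

lemma fstar_exists: fixes a b t :: real
  assumes "a > 1/4" "b > 0" "9 - 27*a + b > 0" "-1 \<le> cos t" "cos t \<le> 0"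
  shows "\<exists>z. -1 < z \<and> z < 1 \<and> fstar a b z t = 0"
proof -
  have m: "fstar a b (-1) t < 0" by (rule fstar_m1[OF assms(1-5)])
  have p: "fstar a b 1 t > 0" by (rule fstar_1[OF assms(1-5)])
  obtain z where z: "-1 \<le> z" "z \<le> 1" "fstar a b z t = 0"
    using IVT'[of "\<lambda>z. fstar a b z t" "-1" 0 1] m p cont_fstar_z by force
  have "z \<noteq> -1" "z \<noteq> 1" using z m p by auto
  then show ?thesis using z by (intro exI[of _ z]) auto
qed

lemma wz_props: fixes a b t :: real
  assumes "a > 1/4" "b > 0" "9 - 27*a + b > 0" "-1 \<le> cos t" "cos t \<le> 0"
  shows "-1 < wz a b t \<and> wz a b t < 1 \<and> fstar a b (wz a b t) t = 0"
proof -
  obtain z where z: "-1 < z \<and> z < 1 \<and> fstar a b z t = 0" using fstar_exists[OF assms] by blast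
  show ?thesis unfolding wz_def
  proof (rule theI[of _ z])
    show "-1 < z \<and> z < 1 \<and> fstar a b z t = 0" by (rule z)
    fix y assume "-1 < y \<and> y < 1 \<and> fstar a b y t = 0"
    then show "y = z" using fstar_uniq[OF assms, of y z] z by blast
  qed
qed

lemma wz_sign: fixes a b t z :: real
  assumes "a > 1/4" "b > 0" "9 - 27*a + b > 0" "-1 \<le> cos t" "cos t \<le> 0"
    "-1 < z" "z < 1"
  shows "(z < wz a b t \<longrightarrow> fstar a b z t < 0) \<and> (z > wz a b t \<longrightarrow> fstar a b z t > 0)"
proof -
  have W: "-1 < wz a b t \<and> wz a b t < 1 \<and> fstar a b (wz a b t) t = 0" by (rule wz_props[OF assms(1-5)])
  have m: "fstar a b (-1) t < 0" by (rule fstar_m1[OF assms(1-5)])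
  have p: "fstar a b 1 t > 0" by (rule fstar_1[OF assms(1-5)])
  have A: "fstar a b z t < 0" if lt: "z < wz a b t"
  proof (rule ccontr)
    assume "\<not> fstar a b z t < 0"
    then obtain y where y: "-1 \<le> y" "y \<le> z" "fstar a b y t = 0"
      using IVT'[of "\<lambda>z. fstar a b z t" "-1" 0 z] m assms cont_fstar_z by force
    have "y \<noteq> -1" using y m by auto
    then have "y = wz a b t" using fstar_uniq[OF assms(1-5), of y "wz a b t"] y W assms by auto
    then show False using y lt by simp
  qed
  have B: "fstar a b z t > 0" if lt: "z > wz a b t"
  proof (rule ccontr)
    assume "\<not> fstar a b z t > 0"
    then obtain y where y: "z \<le> y" "y \<le> 1" "fstar a b y t = 0"
      using IVT'[of "\<lambda>z. fstar a b z t" z 0 1] p assms cont_fstar_z by force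
    have "y \<noteq> 1" using y p by auto
    then have "y = wz a b t" using fstar_uniq[OF assms(1-5), of y "wz a b t"] y W assms by auto
    then show False using y lt by simp
  qed
  show ?thesis using A B by blast
qed



lemma cos_in: fixes t :: real assumes "pi/2 < t" "t < pi" shows "-1 \<le> cos t" "cos t < 0"
proof -
  show "-1 \<le> cos t" by simp
  have "cos (pi - t) > 0" using assms by (intro cos_gt_zero_pi) auto
  then show "cos t < 0" by simp
qed

lemma wz_cont: fixes a b t0 :: real
  assumes ab: "a > 1/4" "b > 0" "9 - 27*a + b > 0" and t0: "pi/2 < t0" "t0 < pi"
  shows "isCont (wz a b) t0"
  unfolding isCont_def tendsto_iff
proof (intro allI impI)
  fix e :: real assume e: "e > 0"
  define w0 where "w0 = wz a b t0"
  have c0: "-1 \<le> cos t0" "cos t0 \<le> 0" using cos_in[OF t0] by auto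
  have W0: "-1 < w0" "w0 < 1" using wz_props[OF ab c0] unfolding w0_def by auto
  define e' where "e' = min e (min (w0+1) (1-w0)) / 2"
  have mm: "min e (min (w0+1) (1-w0)) \<le> e" "min e (min (w0+1) (1-w0)) \<le> w0+1"
    "min e (min (w0+1) (1-w0)) \<le> 1-w0" "min e (min (w0+1) (1-w0)) > 0" using e W0 by auto
  have e'pos: "e' > 0" and e'le: "e' < e" "w0 - e' > -1" "w0 + e' < 1"
    using mm unfolding e'_def by linarith+
  have s1: "fstar a b (w0 - e') t0 < 0"
    using wz_sign[OF ab c0, of "w0-e'"] e'pos e'le W0 unfolding w0_def by auto
  have s2: "fstar a b (w0 + e') t0 > 0"
    using wz_sign[OF ab c0, of "w0+e'"] e'pos e'le W0 unfolding w0_def by auto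
  have cf: "\<And>z. ((\<lambda>t. fstar a b z t) \<longlongrightarrow> fstar a b z t0) (at t0)"
    unfolding fstar_def by (intro tendsto_intros)
  have ev1: "eventually (\<lambda>t. fstar a b (w0 - e') t < 0) (at t0)"
    using order_tendstoD(2)[OF cf s1] .
  have ev2: "eventually (\<lambda>t. fstar a b (w0 + e') t > 0) (at t0)"
    using order_tendstoD(1)[OF cf s2] .
  have ev3: "eventually (\<lambda>t. pi/2 < t) (at t0)"
    using order_tendstoD(1)[OF tendsto_ident_at t0(1)] .
  have ev4: "eventually (\<lambda>t. t < pi) (at t0)"
    using order_tendstoD(2)[OF tendsto_ident_at t0(2)] .
  show "eventually (\<lambda>t. dist (wz a b t) (wz a b t0) < e) (at t0)"
    using ev1 ev2 ev3 ev4
  proof eventually_elim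
    case (elim t)
    then have ct: "-1 \<le> cos t" "cos t \<le> 0" using cos_in[of t] by auto
    have Wt: "-1 < wz a b t \<and> wz a b t < 1 \<and> fstar a b (wz a b t) t = 0" using wz_props[OF ab ct] .
    have "\<not> (w0 - e' > wz a b t)" using wz_sign[OF ab ct, of "w0-e'"] elim e'le e'pos W0 by auto
    moreover have "w0 - e' \<noteq> wz a b t" using Wt elim by auto
    moreover have "\<not> (w0 + e' < wz a b t)" using wz_sign[OF ab ct, of "w0+e'"] elim e'le e'pos W0 by auto
    moreover have "w0 + e' \<noteq> wz a b t" using Wt elim by auto
    ultimately have "\<bar>wz a b t - w0\<bar> < e'" by auto
    then show ?case using e'le unfolding w0_def dist_real_def by simp
  qed
qed

lemma theta_a_props: fixes a :: real assumes "a > 1/4"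
  shows "cos (theta_a a) = -1/(2*sqrt a)" "pi/2 < theta_a a" "theta_a a < pi"
    "(cos (theta_a a))^2 = 1/(4*a)"
proof -
  have sa: "sqrt a > 1/2" using assms
    by (metis real_sqrt_four real_sqrt_less_iff real_sqrt_divide real_sqrt_one)
  define ca where "ca = -1/(2*sqrt a)"
  have sp: "sqrt a > 0" using sa by linarith
  have "1/(2*sqrt a) < 1" using sa sp by (subst divide_less_eq) auto
  moreover have "1/(2*sqrt a) > 0" using sp by simp
  ultimately have ca: "-1 < ca" "ca < 0" unfolding ca_def by auto
  show c: "cos (theta_a a) = -1/(2*sqrt a)" unfolding theta_a_def ca_def[symmetric] using ca
    by (intro cos_arccos) auto
  have b: "0 \<le> theta_a a" "theta_a a \<le> pi" unfolding theta_a_def ca_def[symmetric] using ca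
    by (auto intro: arccos_lbound arccos_ubound)
  show "theta_a a < pi"
  proof (rule ccontr)
    assume "\<not> theta_a a < pi"
    then have "theta_a a = pi" using b by simp
    then show False using c ca ca_def by simp
  qed
  show "pi/2 < theta_a a"
  proof (rule ccontr)
    assume "\<not> pi/2 < theta_a a"
    then have "cos (theta_a a) \<ge> 0" using b by (intro cos_ge_zero) auto
    then show False using c ca ca_def by simp
  qed
  show "(cos (theta_a a))^2 = 1/(4*a)" unfolding c using assms
    by (simp add: power_divide power_mult_distrib)
qed

lemma fstar0: "fstar a b 0 t = 2 * cos t * (1 - 4*a*(cos t)^2)"
  unfolding fstar_def by (simp add: algebra_simps power3_eq_cube power2_eq_square)

lemma wz_pos: fixes a b t :: real
  assumes ab: "a > 1/4" "b > 0" "9 - 27*a + b > 0" and t: "pi/2 < t" "t < theta_a a"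
  shows "wz a b t > 0"
proof -
  note th = theta_a_props[OF ab(1)]
  have t2: "t < pi" using t th by simp
  have ct: "-1 \<le> cos t" "cos t \<le> 0" using cos_in[OF t(1) t2] by auto
  have "cos t > cos (theta_a a)" using t th by (intro cos_monotone_0_pi) auto
  then have "(- cos t)^2 < (- cos (theta_a a))^2" using cos_in[OF t(1) t2]
    by (intro power_strict_mono) auto
  then have "(cos t)^2 < (cos (theta_a a))^2" by simp
  then have "4*a*(cos t)^2 < 1" using th ab by (simp add: field_simps)
  then have f0: "fstar a b 0 t < 0" unfolding fstar0 using cos_in[OF t(1) t2]
    by (simp add: mult_neg_pos)
  have W: "-1 < wz a b t \<and> wz a b t < 1 \<and> fstar a b (wz a b t) t = 0" by (rule wz_props[OF ab ct])
  show ?thesis using wz_sign[OF ab ct, of 0] f0 W by (cases "wz a b t = 0") auto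
qed

lemma wz_neg: fixes a b t :: real
  assumes ab: "a > 1/4" "b > 0" "9 - 27*a + b > 0" and t: "theta_a a < t" "t < pi"
  shows "wz a b t < 0"
proof -
  note th = theta_a_props[OF ab(1)]
  have t1: "pi/2 < t" using t th by simp
  have ct: "-1 \<le> cos t" "cos t \<le> 0" using cos_in[OF t1 t(2)] by auto
  have lt: "cos t < cos (theta_a a)" using t th by (intro cos_monotone_0_pi) auto
  have "(- cos (theta_a a))^2 < (- cos t)^2" using lt th cos_in[OF th(2) th(3)]
    by (intro power_strict_mono) auto
  then have "(cos (theta_a a))^2 < (cos t)^2" by simp
  then have "4*a*(cos t)^2 > 1" using th ab by (simp add: field_simps)
  then have f0: "fstar a b 0 t > 0" unfolding fstar0 using cos_in[OF t1 t(2)]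
    by (simp add: mult_neg_neg)
  have W: "-1 < wz a b t \<and> wz a b t < 1 \<and> fstar a b (wz a b t) t = 0" by (rule wz_props[OF ab ct])
  show ?thesis using wz_sign[OF ab ct, of 0] f0 W by (cases "wz a b t = 0") auto
qed

lemma wz_theta: fixes a b :: real
  assumes ab: "a > 1/4" "b > 0" "9 - 27*a + b > 0"
  shows "wz a b (theta_a a) = 0"
proof -
  note th = theta_a_props[OF ab(1)]
  have ct: "-1 \<le> cos (theta_a a)" "cos (theta_a a) \<le> 0" using cos_in[OF th(2) th(3)] by auto
  have "fstar a b 0 (theta_a a) = 0" unfolding fstar0 th(4) using ab by simp
  then show ?thesis using fstar_uniq[OF ab ct, of 0 "wz a b (theta_a a)"] wz_props[OF ab ct] by auto
qed



lemma gform: "gm a b m t = (inverse (wz a b t) - cos t) * sin ((real m + 1) * t) / sin t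
      - cos ((real m + 1) * t) + (wz a b t) ^ (m + 1)"
  unfolding gm_def zeta_def by (simp add: divide_inverse power_inverse)

lemma lim_top:
  fixes V q r :: "real \<Rightarrow> real"
  assumes "(V \<longlongrightarrow> 0) F" "eventually (\<lambda>x. V x > 0) F" "(q \<longlongrightarrow> Q) F" "Q > 0" "(r \<longlongrightarrow> R) F"
  shows "filterlim (\<lambda>x. inverse (V x) * q x + r x) at_top F"
proof -
  have "filterlim (\<lambda>x. inverse (V x) * q x) at_top F"
    by (rule filterlim_at_top_mult_tendsto_pos[OF assms(3,4) filterlim_inverse_at_top[OF assms(1,2)]])
  from filterlim_tendsto_add_at_top[OF assms(5) this]
  show ?thesis by (simp add: add.commute)
qed

lemma sigma_sq: "((-1::real)^k) * ((-1)^k) = 1"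
  by (simp flip: power_add)

lemma sin_sign:
  fixes m k :: nat and t :: real
  assumes "real k / (real m + 1) * pi < t" "t < (real k + 1) / (real m + 1) * pi"
  shows "(-1::real)^k * sin ((real m + 1) * t) > 0"
proof -
  define x where "x = (real m + 1) * t - real k * pi"
  have "real k * pi < (real m + 1) * t" using assms(1) by (simp add: field_simps)
  moreover have "(real m + 1) * t < (real k + 1) * pi" using assms(2) by (simp add: field_simps)
  ultimately have x: "0 < x" "x < pi" unfolding x_def by (auto simp: algebra_simps)
  have "sin ((real m + 1) * t) = sin (real k * pi + x)" unfolding x_def by simp
  also have "\<dots> = (-1)^k * sin x" by (simp add: sin_add sin_npi cos_npi)
  finally have "(-1::real)^k * sin ((real m + 1) * t) = ((-1)^k * (-1)^k) * sin x" by simp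
  also have "\<dots> = sin x" by (simp add: sigma_sq)
  finally show ?thesis using sin_gt_zero[OF x] by simp
qed

lemma g_endpoint:
  fixes a b :: real and m k :: nat
  assumes ab: "a > 1/4" "b > 0" "9 - 27*a + b > 0"
    and t: "t = real k / (real m + 1) * pi" "pi/2 < t" "t < pi"
  shows "(-1::real)^k * gm a b m t < 0" "(-1::real)^(k+1) * gm a b m t > 0"
proof -
  have ct: "-1 \<le> cos t" "cos t \<le> 0" using cos_in[OF t(2,3)] by auto
  have W: "-1 < wz a b t" "wz a b t < 1" using wz_props[OF ab ct] by auto
  have Np: "(real m + 1) * t = real k * pi" using t(1) by (simp add: field_simps)
  have g: "gm a b m t = - ((-1)^k) + (wz a b t)^(m+1)"
    unfolding gform Np by (simp add: sin_npi cos_npi)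
  have "\<bar>wz a b t\<bar> < 1" using W by simp
  then have "\<bar>wz a b t\<bar>^(m+1) < 1" by (subst power_less_one_iff) auto
  then have wb: "\<bar>(-1::real)^k * (wz a b t)^(m+1)\<bar> < 1" by (simp add: abs_mult power_abs)
  have "(-1::real)^k * gm a b m t = - 1 + (-1)^k * (wz a b t)^(m+1)"
    unfolding g by (simp add: algebra_simps sigma_sq)
  then show "(-1::real)^k * gm a b m t < 0" using wb by (simp add: abs_less_iff)
  have "(-1::real)^(k+1) * gm a b m t = 1 - (-1)^k * (wz a b t)^(m+1)"
    unfolding g by (simp add: algebra_simps sigma_sq)
  then show "(-1::real)^(k+1) * gm a b m t > 0" using wb by (simp add: abs_less_iff)
qed

lemma g_cont:
  fixes a b :: real
  assumes ab: "a > 1/4" "b > 0" "9 - 27*a + b > 0"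
    and S: "\<And>x. x \<in> S \<Longrightarrow> pi/2 < x \<and> x < pi \<and> x \<noteq> theta_a a"
  shows "continuous_on S (\<lambda>t. c * gm a b m t)"
proof (rule continuous_at_imp_continuous_on, intro ballI)
  fix x assume x: "x \<in> S"
  have xs: "pi/2 < x" "x < pi" "x \<noteq> theta_a a" using S[OF x] by auto
  have Wc: "isCont (wz a b) x" by (rule wz_cont[OF ab xs(1,2)])
  have W0: "wz a b x \<noteq> 0"
    using wz_pos[OF ab, of x] wz_neg[OF ab, of x] xs by (cases "x < theta_a a") auto
  have s0: "sin x \<noteq> 0" using xs sin_gt_zero[of x] by auto
  show "isCont (\<lambda>t. c * gm a b m t) x"
    unfolding gform using Wc W0 s0 by (intro continuous_intros) auto
qed



lemma left_zero:
  fixes a b L R :: real and m k :: nat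
  assumes ab: "a > 1/4" "b > 0" "9 - 27*a + b > 0"
    and LR: "L = real k / (real m + 1) * pi" "R = (real k + 1) / (real m + 1) * pi"
    and pos: "pi/2 < L" "L < theta_a a" "theta_a a < R"
  shows "\<exists>t. L < t \<and> t < theta_a a \<and> gm a b m t = 0"
proof -
  define \<sigma> :: real where "\<sigma> = (-1)^k"
  define ta where "ta = theta_a a"
  note th = theta_a_props[OF ab(1), folded ta_def]
  define W where "W = wz a b"
  define q where "q = (\<lambda>t. \<sigma> * sin ((real m + 1) * t) / sin t)"
  define r where "r = (\<lambda>t. - cos t * (\<sigma> * sin ((real m + 1) * t) / sin t)
                   - \<sigma> * cos ((real m + 1) * t) + \<sigma> * (W t)^(m+1))"
  have feq: "(\<lambda>t. \<sigma> * gm a b m t) = (\<lambda>t. inverse (W t) * q t + r t)"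
    unfolding gform q_def r_def W_def by (rule ext) (simp add: divide_inverse algebra_simps)
  have Wc: "isCont W ta" unfolding W_def ta_def using wz_cont[OF ab th(2,3)[unfolded ta_def]] by simp
  have W0: "W ta = 0" unfolding W_def ta_def using wz_theta[OF ab] .
  have st: "sin ta > 0" using th by (intro sin_gt_zero) auto
  have Wl: "(W \<longlongrightarrow> 0) (at ta)" using Wc W0 unfolding isCont_def by simp
  have ql: "(q \<longlongrightarrow> q ta) (at ta)" unfolding q_def using st by (intro tendsto_intros) auto
  have rl: "(r \<longlongrightarrow> (- cos ta * (\<sigma> * sin ((real m + 1) * ta) / sin ta)
                   - \<sigma> * cos ((real m + 1) * ta) + \<sigma> * 0^(m+1))) (at ta)"
    unfolding r_def using st Wl by (intro tendsto_intros) auto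
  have Qp: "q ta > 0" unfolding q_def \<sigma>_def using sin_sign[of k m ta] pos LR st ta_def by simp
  have evW: "eventually (\<lambda>t. W t > 0) (at_left ta)"
    using eventually_at_left_real[of "pi/2" ta] th
    by (auto elim!: eventually_mono simp: W_def ta_def intro!: wz_pos[OF ab])
  have lim: "filterlim (\<lambda>t. \<sigma> * gm a b m t) at_top (at_left ta)"
    unfolding feq
    by (rule lim_top) (use Wl ql rl Qp evW filterlim_at_split in blast)+
  have ev1: "eventually (\<lambda>t. 1 \<le> \<sigma> * gm a b m t) (at_left ta)"
    using lim unfolding filterlim_at_top by blast
  have ev2: "eventually (\<lambda>t. t \<in> {L<..<ta}) (at_left ta)"
    using eventually_at_left_real[of L ta] pos ta_def by simp
  obtain t1 where t1: "1 \<le> \<sigma> * gm a b m t1" "L < t1" "t1 < ta"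
    using eventually_happens'[OF _ eventually_conj[OF ev1 ev2]] by auto
  have fL: "\<sigma> * gm a b m L < 0" unfolding \<sigma>_def
    using g_endpoint(1)[OF ab LR(1)] pos th ta_def by simp
  have cont: "continuous_on {L..t1} (\<lambda>t. \<sigma> * gm a b m t)"
    by (rule g_cont[OF ab]) (use pos t1 th ta_def in auto)
  obtain x where x: "L \<le> x" "x \<le> t1" "\<sigma> * gm a b m x = 0"
    using IVT'[of "\<lambda>t. \<sigma> * gm a b m t" L 0 t1, OF _ _ _ cont] fL t1 by auto
  have "\<sigma> \<noteq> 0" unfolding \<sigma>_def by simp
  then have "gm a b m x = 0" using x by simp
  moreover have "x \<noteq> L" using x fL by auto
  ultimately show ?thesis using x t1 ta_def by (intro exI[of _ x]) auto
qed

lemma right_zero: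
  fixes a b L R :: real and m k :: nat
  assumes ab: "a > 1/4" "b > 0" "9 - 27*a + b > 0"
    and LR: "L = real k / (real m + 1) * pi" "R = (real k + 1) / (real m + 1) * pi"
    and pos: "L < theta_a a" "theta_a a < R" "R < pi"
  shows "\<exists>t. theta_a a < t \<and> t < R \<and> gm a b m t = 0"
proof -
  define \<sigma> :: real where "\<sigma> = (-1)^k"
  define \<tau> :: real where "\<tau> = (-1)^(k+1)"
  have tau: "\<tau> = - \<sigma>" unfolding \<tau>_def \<sigma>_def by simp
  define ta where "ta = theta_a a"
  note th = theta_a_props[OF ab(1), folded ta_def]
  define W where "W = wz a b"
  define q where "q = (\<lambda>t. \<sigma> * sin ((real m + 1) * t) / sin t)"
  define r where "r = (\<lambda>t. cos t * (\<sigma> * sin ((real m + 1) * t) / sin t)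
                   + \<sigma> * cos ((real m + 1) * t) - \<sigma> * (W t)^(m+1))"
  have feq: "(\<lambda>t. \<tau> * gm a b m t) = (\<lambda>t. inverse (- W t) * q t + r t)"
    unfolding gform q_def r_def W_def tau by (rule ext) (simp add: divide_inverse algebra_simps)
  have Wc: "isCont W ta" unfolding W_def ta_def using wz_cont[OF ab th(2,3)[unfolded ta_def]] by simp
  have W0: "W ta = 0" unfolding W_def ta_def using wz_theta[OF ab] .
  have st: "sin ta > 0" using th by (intro sin_gt_zero) auto
  have Wl: "((\<lambda>t. - W t) \<longlongrightarrow> 0) (at ta)" using Wc W0 unfolding isCont_def
    by (metis minus_zero tendsto_minus)
  have Wl': "(W \<longlongrightarrow> 0) (at ta)" using Wc W0 unfolding isCont_def by simp
  have ql: "(q \<longlongrightarrow> q ta) (at ta)" unfolding q_def using st by (intro tendsto_intros) auto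
  have rl: "(r \<longlongrightarrow> (cos ta * (\<sigma> * sin ((real m + 1) * ta) / sin ta)
                   + \<sigma> * cos ((real m + 1) * ta) - \<sigma> * 0^(m+1))) (at ta)"
    unfolding r_def using st Wl' by (intro tendsto_intros) auto
  have Qp: "q ta > 0" unfolding q_def \<sigma>_def using sin_sign[of k m ta] pos LR st ta_def by simp
  have evW: "eventually (\<lambda>t. - W t > 0) (at_right ta)"
    using eventually_at_right_real[of ta pi] th
    by (auto elim!: eventually_mono simp: W_def ta_def intro!: wz_neg[OF ab])
  have lim: "filterlim (\<lambda>t. \<tau> * gm a b m t) at_top (at_right ta)"
    unfolding feq
    by (rule lim_top) (use Wl ql rl Qp evW filterlim_at_split in blast)+
  have ev1: "eventually (\<lambda>t. 1 \<le> \<tau> * gm a b m t) (at_right ta)"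
    using lim unfolding filterlim_at_top by blast
  have ev2: "eventually (\<lambda>t. t \<in> {ta<..<R}) (at_right ta)"
    using eventually_at_right_real[of ta R] pos ta_def by simp
  obtain t1 where t1: "1 \<le> \<tau> * gm a b m t1" "ta < t1" "t1 < R"
    using eventually_happens'[OF _ eventually_conj[OF ev1 ev2]] by auto
  have R': "R = real (k+1) / (real m + 1) * pi" using LR by simp
  have fR: "\<tau> * gm a b m R < 0" unfolding \<tau>_def
    using g_endpoint(1)[OF ab R'] pos th ta_def by simp
  have cont: "continuous_on {t1..R} (\<lambda>t. \<tau> * gm a b m t)"
    by (rule g_cont[OF ab]) (use pos t1 th ta_def in auto)
  obtain x where x: "t1 \<le> x" "x \<le> R" "\<tau> * gm a b m x = 0"
    using IVT2'[of "\<lambda>t. \<tau> * gm a b m t" R 0 t1, OF _ _ _ cont] fR t1 by auto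
  have "\<tau> \<noteq> 0" unfolding \<tau>_def by simp
  then have "gm a b m x = 0" using x by simp
  moreover have "x \<noteq> R" using x fR by auto
  ultimately show ?thesis using x t1 ta_def by (intro exI[of _ x]) auto
qed



theorem mainTheorem18:
  fixes a b :: real and m h :: nat
  assumes "b > 0" and "1 + a + b > 0" and "9 - 27 * a + b > 0"
    and "2 - 8 * a + 8 * a ^ 2 + a * b \<noteq> 0" and "b + 1 - a \<noteq> 0"
    and "a > 1 / 4" and "m \<ge> 6"
    and "(m + 1) div 2 + 1 \<le> h" and "h \<le> m + 1"
    and "theta_a a \<in> Jh m h"
  shows "((m + 1) div 2 + 2 \<le> h \<and> h \<le> m \<longrightarrow>
           (\<exists>t1 t2. t1 \<noteq> t2 \<and> t1 \<in> Jh m h - {theta_a a} \<and> t2 \<in> Jh m h - {theta_a a}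
              \<and> gm a b m t1 = 0 \<and> gm a b m t2 = 0))
       \<and> ((h = m + 1 \<or> h = (m + 1) div 2 + 1) \<longrightarrow>
           (\<exists>t. t \<in> Jh m h - {theta_a a} \<and> gm a b m t = 0))"
proof -
  have ab: "a > 1/4" "b > 0" "9 - 27*a + b > 0" using assms by auto
  note th = theta_a_props[OF ab(1)]
  define h0 where "h0 = (m + 1) div 2 + 1"
  have N: "real m + 1 > 0" by simp
  have pip: "pi > 0" by simp
  show ?thesis
  proof (cases "h = h0")
    case True
    define k where "k = h - 1"
    have hk: "real k + 1 = real h" "real k = real h - 1" using assms(8) unfolding k_def by auto
    have J: "Jh m h = {pi/2 <..< real h / (real m + 1) * pi}" using True h0_def unfolding Jh_def by simp
    have k2: "2 * real k \<le> real m + 1" unfolding k_def True h0_def by linarith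
    have kl: "real k / (real m + 1) * pi \<le> pi/2"
    proof -
      have "(2*real k) * pi \<le> (real m + 1) * pi" by (rule mult_right_mono) (use k2 pip in auto)
      then show ?thesis using N by (simp add: field_simps)
    qed
    have hm: "real h < real m + 1" unfolding True h0_def using assms(7) by linarith
    have "real h * pi < (real m + 1) * pi" by (rule mult_strict_right_mono) (use hm pip in auto)
    then have Rlt: "real h / (real m + 1) * pi < pi" using N by (simp add: field_simps)
    have ta: "pi/2 < theta_a a" "theta_a a < real h / (real m + 1) * pi" using assms(10) J by auto
    obtain t where t: "theta_a a < t" "t < (real k + 1) / (real m + 1) * pi" "gm a b m t = 0"
    proof -
      have L: "real k / (real m + 1) * pi < theta_a a" using kl ta by linarith
      have R: "theta_a a < (real k + 1) / (real m + 1) * pi" "(real k + 1) / (real m + 1) * pi < pi"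
        using ta Rlt hk by auto
      show ?thesis using right_zero[OF ab refl refl L R] that by blast
    qed
    have "t \<in> Jh m h - {theta_a a}" using t ta J hk by auto
    moreover have "\<not> ((m + 1) div 2 + 2 \<le> h)" using True h0_def by simp
    ultimately show ?thesis using t True h0_def by blast
  next
    case False
    define k where "k = h - 1"
    have hk: "real k + 1 = real h" "real k = real h - 1" using assms(8) unfolding k_def by auto
    have J: "Jh m h = {real k / (real m + 1) * pi <..< (real k + 1) / (real m + 1) * pi}"
      using False h0_def hk unfolding Jh_def by simp
    have ta: "real k / (real m + 1) * pi < theta_a a" "theta_a a < (real k + 1) / (real m + 1) * pi"
      using assms(10) J by auto
    have k2: "real m + 1 < 2 * real k" using False assms(8) unfolding k_def h0_def by linarith
    have kl: "pi/2 < real k / (real m + 1) * pi"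
    proof -
      have "(real m + 1) * pi < (2*real k) * pi" by (rule mult_strict_right_mono) (use k2 pip in auto)
      then show ?thesis using N by (simp add: field_simps)
    qed
    obtain t1 where t1: "real k / (real m + 1) * pi < t1" "t1 < theta_a a" "gm a b m t1 = 0"
      using left_zero[OF ab refl refl, of k m] kl ta by auto
    have t1J: "t1 \<in> Jh m h - {theta_a a}" using t1 ta J by auto
    show ?thesis
    proof (cases "h \<le> m")
      case True
      have hm: "real k + 1 < real m + 1" using True hk by simp
      have "(real k + 1) * pi < (real m + 1) * pi" by (rule mult_strict_right_mono) (use hm pip in auto)
      then have Rlt: "(real k + 1) / (real m + 1) * pi < pi" using N by (simp add: field_simps)
      obtain t2 where t2: "theta_a a < t2" "t2 < (real k + 1) / (real m + 1) * pi" "gm a b m t2 = 0"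
        using right_zero[OF ab refl refl, of k m] ta Rlt by auto
      have t2J: "t2 \<in> Jh m h - {theta_a a}" using t2 ta J by auto
      have "t1 \<noteq> t2" using t1 t2 by simp
      then have E: "\<exists>t1 t2. t1 \<noteq> t2 \<and> t1 \<in> Jh m h - {theta_a a} \<and> t2 \<in> Jh m h - {theta_a a}
              \<and> gm a b m t1 = 0 \<and> gm a b m t2 = 0" using t1J t2J t1 t2 by blast
      have "\<not> (h = m + 1 \<or> h = (m + 1) div 2 + 1)" using True False h0_def by auto
      then show ?thesis using E by blast
    next
      case False2: False
      then show ?thesis using t1J t1 False h0_def by auto
    qed
  qed
qed


end
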